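(* Let $n\ge2$, and let $m$ and $I$ be as follows: $n-1=\sum_{i=0}^m p_i2^i$ with $p_i\in\{0,1\}$, $p_m=1$, $I=\{i\mid p_i=1\}$. (1) The finite set of formulas $\{\,y_0\equiv\neg q_{1/n},\ \bigwedge_{i=1}^m (y_i\equiv y_{i-1}^2),\ q_{1/n}\equiv\prod_{i\in I}y_i\,\}$ implicitly defines $1/n$ in the variable $q_{1/n}$ in the standard MV-algebra $[0,1]_{\text{Ł}}$ (i.e. it is satisfiable there, and every valuation giving all its members value $1$ gives $q_{1/n}$ value $1/n$). (2) The size of this set of formulas is polynomial in the binary size of $n$ (i.e. in $\log n$).
   Context: Standard MV-algebra $[0,1]_{\text{Ł}}$: $x\cdot y=\max(0,x+y-1)$, $\neg x=1-x$, $x\land y=\min(x,y)$, $x\equiv y=1-|x-y|$. Powers and $\prod$ refer to $\cdot$. $q_{1/n},y_0,\dots,y_m$ are distinct propositional variables. *)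

theory Defs
  imports Complex_Main
begin

datatype fm =
    Var nat
  | Top              \<comment> \<open>constant 1 (only used as the empty conjunction/product)\<close>
  | Neg fm
  | Wedge fm fm
  | Times fm fm
  | Equiv fm fm

fun eval :: "(nat \<Rightarrow> real) \<Rightarrow> fm \<Rightarrow> real" where
  "eval v (Var i) = v i"
| "eval v Top = 1"
| "eval v (Neg a) = 1 - eval v a"
| "eval v (Wedge a b) = min (eval v a) (eval v b)"
| "eval v (Times a b) = max 0 (eval v a + eval v b - 1)"
| "eval v (Equiv a b) = 1 - \<bar>eval v a - eval v b\<bar>"

definition valuation :: "(nat \<Rightarrow> real) \<Rightarrow> bool" where
  "valuation v \<longleftrightarrow> (\<forall>i. 0 \<le> v i \<and> v i \<le> 1)"

fun fsize :: "fm \<Rightarrow> nat" where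
  "fsize (Var i) = 1"
| "fsize Top = 1"
| "fsize (Neg a) = 1 + fsize a"
| "fsize (Wedge a b) = 1 + fsize a + fsize b"
| "fsize (Times a b) = 1 + fsize a + fsize b"
| "fsize (Equiv a b) = 1 + fsize a + fsize b"

fun bigwedge :: "fm list \<Rightarrow> fm" where
  "bigwedge [] = Top"
| "bigwedge [a] = a"
| "bigwedge (a # as) = Wedge a (bigwedge as)"

fun bigtimes :: "fm list \<Rightarrow> fm" where
  "bigtimes [] = Top"
| "bigtimes [a] = a"
| "bigtimes (a # as) = Times a (bigtimes as)"

abbreviation q :: fm where "q \<equiv> Var 0"
abbreviation y :: "nat \<Rightarrow> fm" where "y i \<equiv> Var (Suc i)"

text \<open>The set of formulas of the lemma, for binary digits p_0..p_m (I = {i \<le> m. p i = 1}).\<close>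
definition Gamma :: "nat \<Rightarrow> (nat \<Rightarrow> nat) \<Rightarrow> fm list" where
  "Gamma m p =
     [ Equiv (y 0) (Neg q),
       bigwedge (map (\<lambda>i. Equiv (y i) (Times (y (i - 1)) (y (i - 1)))) [1..<Suc m]),
       Equiv q (bigtimes (map y (filter (\<lambda>i. p i = 1) [0..<Suc m]))) ]"

definition total_size :: "fm list \<Rightarrow> nat" where
  "total_size \<Gamma> = sum_list (map fsize \<Gamma>)"

definition implicitly_defines :: "fm list \<Rightarrow> nat \<Rightarrow> real \<Rightarrow> bool" where
  "implicitly_defines \<Gamma> x r \<longleftrightarrow>
     (\<exists>v. valuation v \<and> (\<forall>\<phi>\<in>set \<Gamma>. eval v \<phi> = 1)) \<and>
     (\<forall>v. valuation v \<and> (\<forall>\<phi>\<in>set \<Gamma>. eval v \<phi> = 1) \<longrightarrow> v x = r)"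

definition binary_digits :: "nat \<Rightarrow> nat \<Rightarrow> (nat \<Rightarrow> nat) \<Rightarrow> bool" where
  "binary_digits N m p \<longleftrightarrow>
     N = (\<Sum>i\<le>m. p i * 2 ^ i) \<and> (\<forall>i\<le>m. p i \<in> {0, 1}) \<and> p m = 1"

end

theory Submission
  imports Defs
begin

lemma eval_Equiv1: "eval v (Equiv a b) = 1 \<longleftrightarrow> eval v a = eval v b"
  by auto

lemma eval_range: "valuation v \<Longrightarrow> 0 \<le> eval v f \<and> eval v f \<le> 1"
  by (induction f) (auto simp: valuation_def)

lemma bigwedge_one:
  assumes "\<forall>a\<in>set as. eval v a \<le> 1"
  shows "eval v (bigwedge as) \<le> 1 \<and> (eval v (bigwedge as) = 1 \<longleftrightarrow> (\<forall>a\<in>set as. eval v a = 1))"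
  using assms by (induction as rule: bigwedge.induct) (auto simp: min_def)

lemma bigtimes_eval:
  assumes "0 \<le> t" "\<forall>i\<in>set xs. v (Suc i) = max 0 (1 - 2^i * t)"
  shows "eval v (bigtimes (map y xs)) = max 0 (1 - t * (\<Sum>i\<leftarrow>xs. (2::real)^i))"
  using assms(2)
proof (induction xs)
  case Nil
  then show ?case by simp
next
  case (Cons a xs)
  show ?case
  proof (cases xs)
    case Nil
    then show ?thesis using Cons by (simp add: mult.commute)
  next
    case (Cons b rest)
    have IH: "eval v (bigtimes (map y xs)) = max 0 (1 - t * (\<Sum>i\<leftarrow>xs. (2::real)^i))"
      using Cons.IH Cons.prems by simp
    have S: "0 \<le> t * (\<Sum>i\<leftarrow>xs. (2::real)^i)"
    proof -
      have "0 \<le> (\<Sum>i\<leftarrow>xs. (2::real)^i)" by (induction xs) auto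
      then show ?thesis using assms(1) by simp
    qed
    have A: "0 \<le> 2^a * t" using assms(1) by simp
    have e: "eval v (bigtimes (map y (a # xs))) = max 0 (v (Suc a) + eval v (bigtimes (map y xs)) - 1)"
      using Cons by simp
    have va: "v (Suc a) = max 0 (1 - 2^a * t)" using Cons.prems by simp
    have d: "t * (\<Sum>i\<leftarrow>a#xs. (2::real)^i) = 2^a * t + t * (\<Sum>i\<leftarrow>xs. (2::real)^i)"
      by (simp add: algebra_simps)
    show ?thesis unfolding e IH va d using S A by linarith
  qed
qed

lemma digits_sum:
  assumes "\<forall>i\<le>m. p i \<in> {0, 1::nat}"
  shows "(\<Sum>i\<leftarrow>filter (\<lambda>i. p i = 1) [0..<Suc m]. (2::real)^i) = real (\<Sum>i\<le>m. p i * 2 ^ i)"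
  using assms
proof (induction m)
  case 0
  then show ?case by auto
next
  case (Suc m)
  have "p (Suc m) = 0 \<or> p (Suc m) = 1" using Suc.prems by auto
  then show ?case using Suc by auto
qed

lemma yvals:
  assumes "valuation v"
    and h0: "v 1 = 1 - v 0"
    and hs: "\<forall>i\<in>{1..m}. v (Suc i) = max 0 (2 * v (Suc (i - 1)) - 1)"
  shows "i \<le> m \<Longrightarrow> v (Suc i) = max 0 (1 - 2^i * v 0)"
proof (induction i)
  case 0
  have "0 \<le> v 0" "v 0 \<le> 1" using assms(1) by (auto simp: valuation_def)
  then show ?case using h0 by simp
next
  case (Suc i)
  have q0: "0 \<le> 2^i * v 0" using assms(1) by (auto simp: valuation_def)
  have "v (Suc (Suc i)) = max 0 (2 * v (Suc i) - 1)" using hs Suc.prems by force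
  also have "\<dots> = max 0 (1 - 2^(Suc i) * v 0)"
  proof -
    have "v (Suc i) = max 0 (1 - 2^i * v 0)" using Suc by simp
    then show ?thesis using q0 by (simp add: max_def)
  qed
  finally show ?case .
qed

lemma gamma_sat:
  assumes "valuation v"
  shows "(\<forall>\<phi>\<in>set (Gamma m p). eval v \<phi> = 1) \<longleftrightarrow>
     v 1 = 1 - v 0 \<and> (\<forall>i\<in>{1..m}. v (Suc i) = max 0 (2 * v (Suc (i - 1)) - 1))
     \<and> v 0 = eval v (bigtimes (map y (filter (\<lambda>i. p i = 1) [0..<Suc m])))"
proof -
  have "\<forall>a\<in>set (map (\<lambda>i. Equiv (y i) (Times (y (i - 1)) (y (i - 1)))) [1..<Suc m]). eval v a \<le> 1"
    by auto
  then have w: "eval v (bigwedge (map (\<lambda>i. Equiv (y i) (Times (y (i - 1)) (y (i - 1)))) [1..<Suc m])) = 1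
     \<longleftrightarrow> (\<forall>i\<in>{1..m}. v (Suc i) = max 0 (2 * v (Suc (i - 1)) - 1))"
    by (subst bigwedge_one[THEN conjunct2]) (auto simp: eval_Equiv1 simp del: eval.simps(6))
  show ?thesis unfolding Gamma_def using w by (auto simp: eval_Equiv1 simp del: eval.simps(6))
qed

lemma part1:
  assumes n: "n \<ge> 2" and bd: "binary_digits (n - 1) m p"
  shows "implicitly_defines (Gamma m p) 0 (1 / real n)"
proof -
  have sumI: "(\<Sum>i\<leftarrow>filter (\<lambda>i. p i = 1) [0..<Suc m]. (2::real)^i) = real n - 1"
  proof -
    have d: "N = (\<Sum>i\<le>m. p i * 2 ^ i)" "\<forall>i\<le>m. p i \<in> {0, 1}" if "N = n - 1" for N
      using bd that unfolding binary_digits_def by auto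
    have "(\<Sum>i\<leftarrow>filter (\<lambda>i. p i = 1) [0..<Suc m]. (2::real)^i) = real (\<Sum>i\<le>m. p i * 2 ^ i)"
      by (rule digits_sum) (use d in auto)
    also have "\<dots> = real (n - 1)" using d(1)[OF refl] by simp
    also have "\<dots> = real n - 1" using n by simp
    finally show ?thesis .
  qed
  have ex: "\<exists>v. valuation v \<and> (\<forall>\<phi>\<in>set (Gamma m p). eval v \<phi> = 1)"
  proof -
    define v where "v = (\<lambda>i::nat. if i = 0 then 1 / real n else max 0 (1 - 2^(i-1) / real n))"
    have val: "valuation v" unfolding valuation_def v_def using n by auto
    have s1: "\<forall>i\<in>{1..m}. v (Suc i) = max 0 (2 * v (Suc (i - 1)) - 1)"
    proof
      fix i assume "i \<in> {1..m}"
      then obtain j where j: "i = Suc j" by (cases i) auto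
      have "0 \<le> 2^j / real n" by simp
      then show "v (Suc i) = max 0 (2 * v (Suc (i - 1)) - 1)"
        unfolding v_def j by (auto simp: max_def field_simps)
    qed
    have s2: "\<forall>i\<in>set (filter (\<lambda>i. p i = 1) [0..<Suc m]). v (Suc i) = max 0 (1 - 2^i * v 0)"
      unfolding v_def by simp
    have "eval v (bigtimes (map y (filter (\<lambda>i. p i = 1) [0..<Suc m]))) = max 0 (1 - v 0 * (real n - 1))"
      using bigtimes_eval[OF _ s2] sumI unfolding v_def by simp
    also have "\<dots> = v 0" unfolding v_def using n by (simp add: field_simps)
    finally have s3: "v 0 = eval v (bigtimes (map y (filter (\<lambda>i. p i = 1) [0..<Suc m])))" by simp
    have n1: "1 / real n \<le> 1" using n by simp
    have a1: "v 1 = max 0 (1 - 1 / real n)" unfolding v_def by simp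
    have a2: "0 \<le> 1 - 1 / real n" using n1 by linarith
    have s0: "v 1 = 1 - v 0" unfolding a1 max_absorb2[OF a2] unfolding v_def by simp
    have "\<forall>\<phi>\<in>set (Gamma m p). eval v \<phi> = 1"
      using gamma_sat[OF val, THEN iffD2, OF conjI[OF s0 conjI[OF s1 s3]]] .
    then show ?thesis using val by blast
  qed
  have un: "v 0 = 1 / real n" if val: "valuation v" and sat: "\<forall>\<phi>\<in>set (Gamma m p). eval v \<phi> = 1" for v
  proof -
    have H: "v 1 = 1 - v 0 \<and> (\<forall>i\<in>{1..m}. v (Suc i) = max 0 (2 * v (Suc (i - 1)) - 1))
     \<and> v 0 = eval v (bigtimes (map y (filter (\<lambda>i. p i = 1) [0..<Suc m])))"
      using gamma_sat[OF val, THEN iffD1, OF sat] .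
    have h1: "v 1 = 1 - v 0" using H by (rule conjunct1)
    have h2: "\<forall>i\<in>{1..m}. v (Suc i) = max 0 (2 * v (Suc (i - 1)) - 1)" using H by blast
    have h3: "v 0 = eval v (bigtimes (map y (filter (\<lambda>i. p i = 1) [0..<Suc m])))" using H by blast
    have q0: "0 \<le> v 0" using val by (auto simp: valuation_def)
    have s2: "\<forall>i\<in>set (filter (\<lambda>i. p i = 1) [0..<Suc m]). v (Suc i) = max 0 (1 - 2^i * v 0)"
    proof
      fix i assume "i \<in> set (filter (\<lambda>i. p i = 1) [0..<Suc m])"
      then have "i \<le> m" by (simp del: upt_Suc)
      then show "v (Suc i) = max 0 (1 - 2^i * v 0)" by (rule yvals[OF val h1 h2])
    qed
    have e: "v 0 = max 0 (1 - v 0 * (real n - 1))"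
      using h3 unfolding bigtimes_eval[OF q0 s2] sumI .
    have "v 0 \<noteq> 0" using e by auto
    then have "v 0 = 1 - v 0 * (real n - 1)" using e by (auto simp: max_def split: if_splits)
    then have "v 0 * real n = 1" by (simp add: algebra_simps)
    then show ?thesis using n by (simp add: field_simps)
  qed
  show ?thesis unfolding implicitly_defines_def using ex un by blast
qed

lemma fsize_bigwedge:
  "\<forall>a\<in>set as. fsize a \<le> K \<Longrightarrow> fsize (bigwedge as) \<le> (K + 1) * length as + 1"
  by (induction as rule: bigwedge.induct) auto

lemma fsize_bigtimes:
  "\<forall>a\<in>set as. fsize a \<le> K \<Longrightarrow> fsize (bigtimes as) \<le> (K + 1) * length as + 1"
  by (induction as rule: bigtimes.induct) auto

lemma size_bound:
  "total_size (Gamma m p) \<le> 8 * m + 10"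
proof -
  have a: "fsize (bigwedge (map (\<lambda>i. Equiv (y i) (Times (y (i - 1)) (y (i - 1)))) [1..<Suc m])) \<le> 6 * m + 1"
    using fsize_bigwedge[of "map (\<lambda>i. Equiv (y i) (Times (y (i - 1)) (y (i - 1)))) [1..<Suc m]" 5]
    by (simp del: upt_Suc)
  have l: "length (filter (\<lambda>i. p i = 1) [0..<Suc m]) \<le> Suc m"
    using length_filter_le[of "\<lambda>i. p i = 1" "[0..<Suc m]"] by simp
  have b: "fsize (bigtimes (map y (filter (\<lambda>i. p i = 1) [0..<Suc m]))) \<le> 2 * Suc m + 1"
  proof -
    define xs where "xs = filter (\<lambda>i. p i = 1) [0..<Suc m]"
    have "fsize (bigtimes (map y xs)) \<le> 2 * length (map y xs) + 1"
      using fsize_bigtimes[of "map y xs" 1] by auto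
    then show ?thesis using l unfolding xs_def[symmetric] by simp
  qed
  show ?thesis unfolding total_size_def Gamma_def using a b by simp
qed

lemma part2:
  assumes n: "n \<ge> 2" and bd: "binary_digits (n - 1) m p"
  shows "real (total_size (Gamma m p)) \<le> 18 * (log 2 (real n)) ^ 1"
proof -
  have "p m * 2 ^ m \<le> (\<Sum>i\<le>m. p i * 2 ^ i)"
    by (rule member_le_sum) auto
  then have "2 ^ m \<le> n - 1" using bd unfolding binary_digits_def by simp
  then have "2 ^ m \<le> n" by linarith
  then have "real (2 ^ m) \<le> real n" by (simp only: of_nat_le_iff)
  then have "(2::real) ^ m \<le> real n" by simp
  then have lm: "real m \<le> log 2 (real n)"
    by (simp add: le_log_of_power)
  have l1: "1 \<le> log 2 (real n)" using n by simp
  have "real (total_size (Gamma m p)) \<le> 8 * real m + 10"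
    using size_bound[of m p] by linarith
  then show ?thesis using lm l1 by simp
qed

theorem lemma4p2:
  shows "(\<forall>(n::nat) m p. n \<ge> 2 \<longrightarrow> binary_digits (n - 1) m p \<longrightarrow>
            implicitly_defines (Gamma m p) 0 (1 / real n))
       \<and> (\<exists>(c::real) (k::nat). \<forall>(n::nat) m p. n \<ge> 2 \<longrightarrow> binary_digits (n - 1) m p \<longrightarrow>
            real (total_size (Gamma m p)) \<le> c * (log 2 (real n)) ^ k)"
  using part1 part2 by blast

end
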